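(* Let $n\ge1$ and let $A_1,\dots,A_n$ be events in a probability space. Then for every $m\in\{0,1,\dots,n-1\}$, \[ \Pr\Big(\bigcup_{i=1}^n A_i\Big) \ge \frac{1}{n-m}\Bigg(\sum_{k=1}^m (-1)^{k-1}\frac{\binom mk}{\binom nk}\cdot\frac{nk-(m+1)(k-1)}{m-k+1}\sum_{1\le i_1<\dots<i_k\le n}\Pr(A_{i_1}\cap\dots\cap A_{i_k}) + (-1)^m\frac{m+1}{\binom nm}\sum_{1\le i_1<\dots<i_{m+1}\le n}\Pr(A_{i_1}\cap\dots\cap A_{i_{m+1}})\Bigg). \]
   Context: An empty sum (e.g. the first sum when $m=0$) equals $0$. *)

theory Defs
  imports "HOL-Probability.Probability"
begin

end

theory Submission
  imports Defs
begin

lemma id1: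
  "j \<le> n \<Longrightarrow> M \<le> n \<Longrightarrow>
   (\<Sum>k\<le>M. (-1::int)^k * int (j choose k) * int ((n-k) choose (M-k))) = int ((n-j) choose M)"
proof (induction j arbitrary: n M)
  case 0
  have "(\<Sum>k\<le>M. (-1::int)^k * int (0 choose k) * int ((n-k) choose (M-k)))
      = (\<Sum>k\<le>M. if k = 0 then int (n choose M) else 0)"
    by (rule sum.cong) auto
  then show ?case by simp
next
  case (Suc j)
  show ?case
  proof (cases M)
    case 0 then show ?thesis by simp
  next
    case (Suc M')
    obtain n' where n: "n = Suc n'" using Suc.prems by (cases n) auto
    have h: "j \<le> Suc n'" "Suc M' \<le> Suc n'" "j \<le> n'" "M' \<le> n'"
      using Suc.prems n \<open>M = Suc M'\<close> by auto
    define g where "g k = int ((Suc n'-k) choose (Suc M'-k))" for k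
    have split: "int (Suc j choose k) = int (j choose k) + (if k = 0 then 0 else int (j choose (k-1)))" for k
      by (cases k) auto
    have "(\<Sum>k\<le>Suc M'. (-1::int)^k * int (Suc j choose k) * g k)
        = (\<Sum>k\<le>Suc M'. (-1::int)^k * int (j choose k) * g k)
          + (\<Sum>k\<le>Suc M'. (-1::int)^k * (if k = 0 then 0 else int (j choose (k-1))) * g k)"
      unfolding split by (simp add: algebra_simps sum.distrib)
    also have "(\<Sum>k\<le>Suc M'. (-1::int)^k * int (j choose k) * g k) = int ((Suc n' - j) choose Suc M')"
      using Suc.IH[OF h(1) h(2)] by (simp add: g_def)
    also have "(\<Sum>k\<le>Suc M'. (-1::int)^k * (if k = 0 then 0 else int (j choose (k-1))) * g k)
        = (\<Sum>l\<le>M'. (-1::int)^(Suc l) * int (j choose l) * g (Suc l))"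
      by (subst sum.atMost_Suc_shift) simp
    also have "\<dots> = - (\<Sum>l\<le>M'. (-1::int)^l * int (j choose l) * int ((n'-l) choose (M'-l)))"
      by (simp add: g_def sum_negf[symmetric])
    also have "\<dots> = - int ((n'-j) choose M')"
      using Suc.IH[OF h(3) h(4)] by simp
    finally have "(\<Sum>k\<le>Suc M'. (-1::int)^k * int (Suc j choose k) * g k)
        = int ((Suc n' - j) choose Suc M') - int ((n'-j) choose M')" by simp
    also have "\<dots> = int ((n' - j) choose Suc M')"
      using h(3) by (simp add: Suc_diff_le)
    finally show ?thesis using n \<open>M = Suc M'\<close> by (simp add: g_def)
  qed
qed

lemma id2:
  assumes "1 \<le> j" "j \<le> n" "1 \<le> M" "M \<le> n"
  shows "(\<Sum>k=1..M. (-1::int)^(k-1) * int (k * (j choose k)) * int ((n-k) choose (M-k)))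
        = int (j * ((n-j) choose (M-1)))"
proof -
  obtain j' n' M' where e: "j = Suc j'" "n = Suc n'" "M = Suc M'"
    using assms by (metis Suc_le_D One_nat_def)
  have le: "j' \<le> n'" "M' \<le> n'" using assms e by auto
  have "(\<Sum>k=1..M. (-1::int)^(k-1) * int (k * (j choose k)) * int ((n-k) choose (M-k)))
      = (\<Sum>l=0..M'. (-1::int)^l * int (Suc l * (Suc j' choose Suc l)) * int ((n'-l) choose (M'-l)))"
    unfolding e One_nat_def sum.shift_bounds_cl_Suc_ivl by simp
  also have "\<dots> = (\<Sum>l\<le>M'. int (Suc j') * ((-1::int)^l * int (j' choose l) * int ((n'-l) choose (M'-l))))"
    by (simp only: Suc_times_binomial atLeast0AtMost) (simp add: algebra_simps)
  also have "\<dots> = int (Suc j') * int ((n'-j') choose M')"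
    by (simp add: sum_distrib_left[symmetric] id1[OF le])
  also have "\<dots> = int (j * ((n-j) choose (M-1)))" using e by (simp add: algebra_simps)
  finally show ?thesis .
qed

lemma main_ineq:
  fixes n m j :: nat
  assumes "m < n" "1 \<le> j" "j \<le> n"
  shows "(1 / (real n - real m)) *
    ((\<Sum>k=1..m. (-1) ^ (k - 1) * (real (m choose k) / real (n choose k)) *
        ((real n * real k - (real m + 1) * (real k - 1)) / (real m - real k + 1)) *
        real (j choose k))
     + (-1) ^ m * ((real m + 1) / real (n choose m)) * real (j choose (m+1))) \<le> 1"
proof -
  define M where "M = Suc m"
  define Cn where "Cn = n choose M"
  have MleN: "M \<le> n" "1 \<le> M" using assms by (auto simp: M_def)
  have Cnpos: "Cn > 0" using MleN by (simp add: Cn_def)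
  define t where "t k = (-1::real)^(k-1) * real (j choose k) * real ((n-k) choose (M-k))
      * ((real n - real M) * real k + real M)" for k
  have tm: "(-1)^(k-1) * (real (m choose k) / real (n choose k)) *
        ((real n * real k - (real m + 1) * (real k - 1)) / (real m - real k + 1)) *
        real (j choose k) = t k / (real M * real Cn)" if k: "k \<in> {1..m}" for k
  proof -
    have kM: "k \<le> M" "M \<le> n" "k \<le> n" using k MleN by (auto simp: M_def)
    have e1: "Cn * (M choose k) = (n choose k) * ((n-k) choose (M-k))"
      using choose_mult[OF kM(1) kM(2)] by (simp add: Cn_def)
    have e2: "(M - k) * (M choose k) = M * (m choose k)"
      using binomial_absorb_comp[of M k] by (simp add: M_def)
    have nat_eq: "(m choose k) * M * Cn = ((n-k) choose (M-k)) * (n choose k) * (M-k)"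
    proof -
      have "((n-k) choose (M-k)) * (n choose k) * (M-k) = ((n choose k) * ((n-k) choose (M-k))) * (M-k)"
        by (simp only: mult_ac)
      also have "\<dots> = (Cn * (M choose k)) * (M-k)" using e1 by simp
      also have "\<dots> = Cn * ((M - k) * (M choose k))" by (simp only: mult_ac)
      also have "\<dots> = (m choose k) * M * Cn" using e2 by simp
      finally show ?thesis by simp
    qed
    hence real_eq: "real (m choose k) * real M * real Cn = real ((n-k) choose (M-k)) * real (n choose k) * real (M-k)"
      by (metis of_nat_mult)
    have rMk: "real (M - k) = real m - real k + 1" using k by (simp add: M_def of_nat_diff)
    have pos1: "real (n choose k) > 0" using kM by simp
    have pos2: "real m - real k + 1 > 0" using k by simp
    have num: "real n * real k - (real m + 1) * (real k - 1) = (real n - real M) * real k + real M"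
      by (simp add: M_def algebra_simps)
    have Qpos: "real M * real Cn > 0" using Cnpos MleN by simp
    have h: "real (m choose k) / (real (n choose k) * (real m - real k + 1))
        = real ((n-k) choose (M-k)) / (real M * real Cn)"
      using pos1 pos2 Qpos real_eq rMk Cnpos MleN by (subst frac_eq_eq) (auto simp: mult_ac)
    have "(-1)^(k-1) * (real (m choose k) / real (n choose k)) *
        (((real n - real M) * real k + real M) / (real m - real k + 1)) * real (j choose k)
        = (-1)^(k-1) * real (j choose k) * ((real n - real M) * real k + real M) *
          (real (m choose k) / (real (n choose k) * (real m - real k + 1)))"
      by (simp add: field_simps)
    also have "\<dots> = t k / (real M * real Cn)" unfolding h t_def by (simp add: field_simps)
    finally show ?thesis unfolding num .
  qed
  have last: "(-1)^m * ((real m + 1) / real (n choose m)) * real (j choose (m+1)) = t M / (real M * real Cn)"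
  proof -
    have a: "M * Cn = (n - m) * (n choose m)"
      using binomial_absorption[of m n] binomial_absorb_comp[of n m] by (simp add: M_def Cn_def)
    hence ar: "real M * real Cn = (real n - real m) * real (n choose m)"
      using assms by (metis of_nat_diff of_nat_mult less_imp_le)
    have pos1: "real (n choose m) > 0" using assms by simp
    have "t M = (-1)^m * real (j choose (m+1)) * ((real n - real m) * real M)"
      by (simp add: t_def M_def algebra_simps)
    hence "t M / (real M * real Cn) = ((-1)^m * real (j choose (m+1)) * real M) * (real n - real m)
        / (real (n choose m) * (real n - real m))"
      unfolding ar by (simp add: mult_ac)
    also have "\<dots> = ((-1)^m * real (j choose (m+1)) * real M) / real (n choose m)"
      using assms by (intro mult_divide_mult_cancel_right) simp
    finally show ?thesis by (simp add: M_def)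
  qed
  have P: "(\<Sum>k=1..m. (-1) ^ (k - 1) * (real (m choose k) / real (n choose k)) *
        ((real n * real k - (real m + 1) * (real k - 1)) / (real m - real k + 1)) *
        real (j choose k))
     + (-1) ^ m * ((real m + 1) / real (n choose m)) * real (j choose (m+1))
     = (\<Sum>k=1..M. t k) / (real M * real Cn)"
  proof -
    have "(\<Sum>k=1..m. (-1) ^ (k - 1) * (real (m choose k) / real (n choose k)) *
        ((real n * real k - (real m + 1) * (real k - 1)) / (real m - real k + 1)) *
        real (j choose k)) = (\<Sum>k=1..m. t k / (real M * real Cn))"
      by (rule sum.cong[OF refl tm])
    hence "?thesis \<longleftrightarrow> (\<Sum>k=1..m. t k / (real M * real Cn)) + t M / (real M * real Cn)
        = (\<Sum>k=1..M. t k) / (real M * real Cn)" using last by simp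
    moreover have "(\<Sum>k=1..m. t k / (real M * real Cn)) + t M / (real M * real Cn)
        = (\<Sum>k=1..M. t k) / (real M * real Cn)"
      by (simp add: M_def sum_divide_distrib[symmetric] add_divide_distrib)
    ultimately show ?thesis by blast
  qed
  have i1: "(\<Sum>k=1..M. (-1::int)^(k-1) * int (j choose k) * int ((n-k) choose (M-k)))
      = int Cn - int ((n-j) choose M)"
  proof -
    have "{..M} = insert 0 {1..M}" by auto
    hence "(\<Sum>k\<le>M. (-1::int)^k * int (j choose k) * int ((n-k) choose (M-k)))
        = int Cn + (\<Sum>k=1..M. (-1::int)^k * int (j choose k) * int ((n-k) choose (M-k)))"
      by (simp add: Cn_def)
    moreover have "(\<Sum>k=1..M. (-1::int)^k * int (j choose k) * int ((n-k) choose (M-k)))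
        = - (\<Sum>k=1..M. (-1::int)^(k-1) * int (j choose k) * int ((n-k) choose (M-k)))"
      unfolding sum_negf[symmetric]
    proof (rule sum.cong)
      fix k assume "k \<in> {1..M}"
      then obtain k' where "k = Suc k'" by (cases k) auto
      then show "(-1::int)^k * int (j choose k) * int ((n-k) choose (M-k))
          = - ((-1::int)^(k-1) * int (j choose k) * int ((n-k) choose (M-k)))" by simp
    qed simp
    ultimately show ?thesis using id1[OF assms(3) MleN(1)] by linarith
  qed
  note i2 = id2[OF assms(2) assms(3) MleN(2) MleN(1)]
  have T: "(\<Sum>k=1..M. t k) = real M * (real Cn - real ((n-j) choose M))
      + (real n - real M) * real (j * ((n-j) choose (M-1)))"
  proof -
    have r1: "(\<Sum>k=1..M. (-1::real)^(k-1) * real (j choose k) * real ((n-k) choose (M-k)))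
      = real Cn - real ((n-j) choose M)"
      using arg_cong[OF i1, of "of_int :: int \<Rightarrow> real"] by simp
    have r2: "(\<Sum>k=1..M. (-1::real)^(k-1) * real (k * (j choose k)) * real ((n-k) choose (M-k)))
      = real (j * ((n-j) choose (M-1)))"
      using arg_cong[OF i2, of "of_int :: int \<Rightarrow> real"] by simp
    have "(\<Sum>k=1..M. t k) = real M * (\<Sum>k=1..M. (-1::real)^(k-1) * real (j choose k) * real ((n-k) choose (M-k)))
      + (real n - real M) * (\<Sum>k=1..M. (-1::real)^(k-1) * real (k * (j choose k)) * real ((n-k) choose (M-k)))"
      by (simp add: t_def sum_distrib_left sum.distrib[symmetric] algebra_simps)
    then show ?thesis using r1 r2 by simp
  qed
  have b1: "j * ((n-j) choose (M-1)) \<le> M * Cn"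
  proof -
    have "j * ((n-j) choose (M-1)) \<le> n * ((n-1) choose (M-1))"
      using assms by (intro mult_le_mono binomial_right_mono) auto
    also have "\<dots> = M * Cn" using times_binomial_minus1_eq[of M n] MleN by (simp add: Cn_def)
    finally show ?thesis .
  qed
  hence b1r: "real (j * ((n-j) choose (M-1))) \<le> real M * real Cn"
    by (metis of_nat_le_iff of_nat_mult)
  have nM: "real n - real M \<ge> 0" using MleN by simp
  have "(real n - real M) * real (j * ((n-j) choose (M-1))) \<le> (real n - real M) * (real M * real Cn)"
    using b1r nM by (rule mult_left_mono)
  moreover have "real M * (real Cn - real ((n-j) choose M)) \<le> real M * real Cn"
    by (simp add: right_diff_distrib)
  ultimately have "(\<Sum>k=1..M. t k) \<le> real M * real Cn + (real n - real M) * (real M * real Cn)"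
    unfolding T by linarith
  also have "\<dots> = (real n - real m) * (real M * real Cn)" by (simp add: M_def algebra_simps)
  finally have Tle: "(\<Sum>k=1..M. t k) \<le> (real n - real m) * (real M * real Cn)" .
  have pos: "real M * real Cn > 0" "real n - real m > 0" using Cnpos assms MleN by auto
  have pq: "(real n - real m) * (real M * real Cn) > 0" using pos by simp
  have "(1 / (real n - real m)) * ((\<Sum>k=1..M. t k) / (real M * real Cn))
      = (\<Sum>k=1..M. t k) / ((real n - real m) * (real M * real Cn))" by simp
  also have "\<dots> \<le> 1" using Tle pq by (simp add: pos_divide_le_eq)
  finally show ?thesis unfolding P .
qed

lemma count_ind:
  fixes A :: "nat \<Rightarrow> 'a set"
  shows "(\<Sum>S\<in>{S. S \<subseteq> {1..n} \<and> card S = k}. indicator (\<Inter>i\<in>S. A i) x :: real)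
       = real (card {i\<in>{1..n}. x \<in> A i} choose k)"
proof -
  define J where "J = {i\<in>{1..n}. x \<in> A i}"
  have fin: "finite {S. S \<subseteq> {1..n} \<and> card S = k}" by (rule finite_subset[of _ "Pow {1..n}"]) auto
  have "(\<Sum>S\<in>{S. S \<subseteq> {1..n} \<and> card S = k}. indicator (\<Inter>i\<in>S. A i) x :: real)
      = (\<Sum>S\<in>{S. S \<subseteq> {1..n} \<and> card S = k}. if S \<subseteq> J then 1 else 0)"
    by (rule sum.cong) (auto simp: indicator_def J_def)
  also have "\<dots> = real (card {S\<in>{S. S \<subseteq> {1..n} \<and> card S = k}. S \<subseteq> J})"
    using fin by (simp add: sum.If_cases Int_def)
  also have "{S\<in>{S. S \<subseteq> {1..n} \<and> card S = k}. S \<subseteq> J} = {S. S \<subseteq> J \<and> card S = k}"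
    by (auto simp: J_def)
  also have "card \<dots> = card J choose k" by (rule n_subsets) (simp add: J_def)
  finally show ?thesis by (simp add: J_def)
qed

theorem corollary5:
  fixes M :: "'a measure" and A :: "nat \<Rightarrow> 'a set" and n m :: nat
  assumes "prob_space M"
    and "n \<ge> 1"
    and "\<And>i. i \<in> {1..n} \<Longrightarrow> A i \<in> sets M"
    and "m < n"
  shows "measure M (\<Union>i\<in>{1..n}. A i) \<ge>
    (1 / (real n - real m)) *
    ((\<Sum>k=1..m. (-1) ^ (k - 1) * (real (m choose k) / real (n choose k)) *
        ((real n * real k - (real m + 1) * (real k - 1)) / (real m - real k + 1)) *
        (\<Sum>S\<in>{S. S \<subseteq> {1..n} \<and> card S = k}. measure M (\<Inter>i\<in>S. A i)))
     + (-1) ^ m * ((real m + 1) / real (n choose m)) *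
        (\<Sum>S\<in>{S. S \<subseteq> {1..n} \<and> card S = m + 1}. measure M (\<Inter>i\<in>S. A i)))"
proof -
  interpret prob_space M by fact
  define K where "K k = {S. S \<subseteq> {1..n} \<and> card S = k}" for k
  define ind where "ind k x = (\<Sum>S\<in>K k. indicator (\<Inter>i\<in>S. A i) x :: real)" for k x
  define c where "c k = (-1) ^ (k - 1) * (real (m choose k) / real (n choose k)) *
        ((real n * real k - (real m + 1) * (real k - 1)) / (real m - real k + 1))" for k
  define d where "d = (-1) ^ m * ((real m + 1) / real (n choose m))"
  have finK: "finite (K k)" for k unfolding K_def by (rule finite_subset[of _ "Pow {1..n}"]) auto
  have setsS: "(\<Inter>i\<in>S. A i) \<in> sets M" if "S \<in> K k" "1 \<le> k" for S k
  proof -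
    have "finite S" "S \<noteq> {}" "S \<subseteq> {1..n}" using that unfolding K_def
      by (auto intro: finite_subset)
    then show ?thesis using assms(3) by (intro sets.finite_INT) auto
  qed
  have intS: "integrable M (ind k)" if "1 \<le> k" for k
    unfolding ind_def using setsS[OF _ that]
    by (intro Bochner_Integration.integrable_sum) (auto intro!: integrable_real_indicator simp: less_top[symmetric])
  have eqS: "(\<Sum>S\<in>K k. measure M (\<Inter>i\<in>S. A i)) = integral\<^sup>L M (ind k)" if "1 \<le> k" for k
  proof -
    have "integral\<^sup>L M (ind k) = (\<Sum>S\<in>K k. integral\<^sup>L M (indicator (\<Inter>i\<in>S. A i) :: 'a \<Rightarrow> real))"
      unfolding ind_def using setsS[OF _ that]
      by (intro Bochner_Integration.integral_sum) (auto intro!: integrable_real_indicator simp: less_top[symmetric])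
    also have "\<dots> = (\<Sum>S\<in>K k. measure M (\<Inter>i\<in>S. A i))"
      using setsS[OF _ that] by (intro sum.cong) (auto simp: Int_absorb2 sets.sets_into_space)
    finally show ?thesis by simp
  qed
  have RHS: "(1 / (real n - real m)) *
    ((\<Sum>k=1..m. c k * (\<Sum>S\<in>K k. measure M (\<Inter>i\<in>S. A i)))
     + d * (\<Sum>S\<in>K (m+1). measure M (\<Inter>i\<in>S. A i)))
     = integral\<^sup>L M (\<lambda>x. (1 / (real n - real m)) * ((\<Sum>k=1..m. c k * ind k x) + d * ind (m+1) x))"
  proof -
    have "(\<Sum>k=1..m. c k * (\<Sum>S\<in>K k. measure M (\<Inter>i\<in>S. A i))) = (\<Sum>k=1..m. c k * integral\<^sup>L M (ind k))"
      using eqS by (intro sum.cong) auto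
    also have "\<dots> = (\<Sum>k=1..m. integral\<^sup>L M (\<lambda>x. c k * ind k x))"
      by simp
    also have "\<dots> = integral\<^sup>L M (\<lambda>x. \<Sum>k=1..m. c k * ind k x)"
      using intS by (intro Bochner_Integration.integral_sum[symmetric]) auto
    finally have a: "(\<Sum>k=1..m. c k * (\<Sum>S\<in>K k. measure M (\<Inter>i\<in>S. A i))) = integral\<^sup>L M (\<lambda>x. \<Sum>k=1..m. c k * ind k x)" .
    have b: "d * (\<Sum>S\<in>K (m+1). measure M (\<Inter>i\<in>S. A i)) = integral\<^sup>L M (\<lambda>x. d * ind (m+1) x)"
      using eqS[of "m+1"] by simp
    have i1: "integrable M (\<lambda>x. \<Sum>k=1..m. c k * ind k x)" using intS by auto
    have i2: "integrable M (\<lambda>x. d * ind (m+1) x)" using intS[of "m+1"] by auto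
    have "integral\<^sup>L M (\<lambda>x. (1 / (real n - real m)) * ((\<Sum>k=1..m. c k * ind k x) + d * ind (m+1) x))
      = (1 / (real n - real m)) * integral\<^sup>L M (\<lambda>x. (\<Sum>k=1..m. c k * ind k x) + d * ind (m+1) x)"
      by (rule integral_mult_right_zero)
    also have "integral\<^sup>L M (\<lambda>x. (\<Sum>k=1..m. c k * ind k x) + d * ind (m+1) x)
       = integral\<^sup>L M (\<lambda>x. \<Sum>k=1..m. c k * ind k x) + integral\<^sup>L M (\<lambda>x. d * ind (m+1) x)"
      by (rule Bochner_Integration.integral_add[OF i1 i2])
    finally show ?thesis unfolding a b by (metis (no_types, lifting))
  qed
  have intR: "integrable M (\<lambda>x. (1 / (real n - real m)) * ((\<Sum>k=1..m. c k * ind k x) + d * ind (m+1) x))"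
  proof -
    have i1: "integrable M (\<lambda>x. \<Sum>k=1..m. c k * ind k x)" using intS by auto
    have i2: "integrable M (\<lambda>x. d * ind (m+1) x)" using intS[of "m+1"] by auto
    show ?thesis using Bochner_Integration.integrable_add[OF i1 i2] by (rule integrable_mult_right)
  qed
  have setU: "(\<Union>i\<in>{1..n}. A i) \<in> sets M" using assms(3) by auto
  have LHS: "measure M (\<Union>i\<in>{1..n}. A i) = integral\<^sup>L M (indicator (\<Union>i\<in>{1..n}. A i))"
    using setU by (simp add: Int_absorb2 sets.sets_into_space)
  have pt: "(1 / (real n - real m)) * ((\<Sum>k=1..m. c k * ind k x) + d * ind (m+1) x)
      \<le> indicator (\<Union>i\<in>{1..n}. A i) x" for x
  proof -
    define j where "j = card {i\<in>{1..n}. x \<in> A i}"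
    have indj: "ind k x = real (j choose k)" for k
      unfolding ind_def K_def j_def by (rule count_ind)
    have jn: "j \<le> n" proof -
      have "j \<le> card {1..n}" unfolding j_def by (rule card_mono) auto
      then show ?thesis by simp
    qed
    show ?thesis
    proof (cases "j = 0")
      case True
      have "(\<Sum>k=1..m. c k * ind k x) = 0" unfolding indj True
        by (intro sum.neutral) auto
      then show ?thesis by (simp add: indj True)
    next
      case False
      then have "x \<in> (\<Union>i\<in>{1..n}. A i)" unfolding j_def by (metis (mono_tags, lifting) card.empty empty_Collect_eq UN_I mem_Collect_eq)
      moreover have "(1 / (real n - real m)) * ((\<Sum>k=1..m. c k * ind k x) + d * ind (m+1) x) \<le> 1"
        using main_ineq[OF assms(4) _ jn] False unfolding indj c_def d_def by (simp add: mult_ac)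
      ultimately show ?thesis by simp
    qed
  qed
  have "integral\<^sup>L M (\<lambda>x. (1 / (real n - real m)) * ((\<Sum>k=1..m. c k * ind k x) + d * ind (m+1) x))
      \<le> integral\<^sup>L M (indicator (\<Union>i\<in>{1..n}. A i))"
    using intR setU pt by (intro integral_mono) (auto intro!: integrable_real_indicator simp: less_top[symmetric])
  hence "(1 / (real n - real m)) *
    ((\<Sum>k=1..m. c k * (\<Sum>S\<in>K k. measure M (\<Inter>i\<in>S. A i)))
     + d * (\<Sum>S\<in>K (m+1). measure M (\<Inter>i\<in>S. A i))) \<le> measure M (\<Union>i\<in>{1..n}. A i)"
    unfolding RHS LHS .
  then show ?thesis unfolding c_def d_def K_def .
qed

end
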